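(* Suppose that $\theta(n)=O(n^{\alpha})$ for some $\alpha\in(0,1]$. Then $\theta'(m)=O(m^{\beta})$, where $\beta=\frac{\alpha}{1+\alpha}$.
   Context: An interval colouring of a graph $G$ is a proper edge-colouring $c\colon E(G)\to\mathbb{N}$ such that for every vertex $v$ the set of colours on edges incident to $v$ is a set of consecutive integers. The interval colouring thickness $\theta(G)$ is the minimum number of interval colourable subgraphs into which $E(G)$ can be edge-decomposed. $\theta(n)$ is the maximum of $\theta(G)$ over graphs $G$ on $n$ vertices and $\theta'(m)$ the maximum of $\theta(G)$ over graphs with $m$ edges. *)

theory Defs
  imports Main "HOL-Library.Landau_Symbols"
begin

text \<open>A finite simple graph is given by its edge set: a finite set of 2-element
  subsets of the vertex type nat. Isolated vertices are irrelevant for colourings.\<close>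

definition simple_edges :: "nat set set \<Rightarrow> bool" where
  "simple_edges E \<longleftrightarrow> finite E \<and> (\<forall>e\<in>E. card e = 2)"

definition interval_colouring :: "nat set set \<Rightarrow> (nat set \<Rightarrow> nat) \<Rightarrow> bool" where
  "interval_colouring F c \<longleftrightarrow>
     (\<forall>e\<in>F. \<forall>f\<in>F. e \<noteq> f \<and> e \<inter> f \<noteq> {} \<longrightarrow> c e \<noteq> c f) \<and>
     (\<forall>v a b x. a \<in> c ` {e\<in>F. v \<in> e} \<and> b \<in> c ` {e\<in>F. v \<in> e} \<and> a \<le> x \<and> x \<le> b
        \<longrightarrow> x \<in> c ` {e\<in>F. v \<in> e})"

definition interval_colourable :: "nat set set \<Rightarrow> bool" where
  "interval_colourable F \<longleftrightarrow> (\<exists>c. interval_colouring F c)"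

definition ic_thickness :: "nat set set \<Rightarrow> nat" where
  "ic_thickness E = (LEAST k. \<exists>p. (\<forall>e\<in>E. p e < k) \<and>
       (\<forall>i<k. interval_colourable {e\<in>E. p e = i}))"

definition theta_n :: "nat \<Rightarrow> nat" where
  "theta_n n = Max {ic_thickness E | E. simple_edges E \<and> (\<forall>e\<in>E. e \<subseteq> {0..<n})}"

definition theta_m :: "nat \<Rightarrow> nat" where
  "theta_m m = Max {ic_thickness E | E. simple_edges E \<and> card E = m}"

end

theory Submission
  imports Defs
begin

lemma ic_small: assumes "\<forall>e\<in>F. \<forall>f\<in>F. e = f" shows "interval_colourable F"
  unfolding interval_colourable_def interval_colouring_def
  by (rule exI[of _ "\<lambda>_. 0"]) (use assms in auto)

lemma ic_ex: assumes "finite E"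
  shows "\<exists>(k::nat) p. (\<forall>e\<in>E. p e < k) \<and> (\<forall>i<k. interval_colourable {e\<in>E. p e = i})"
proof -
  obtain p where p: "bij_betw p E {0..<card E}" using ex_bij_betw_finite_nat[OF assms] by blast
  have A: "\<forall>e\<in>E. p e < card E" using p by (auto simp: bij_betw_def)
  have B: "\<forall>i<card E. interval_colourable {e\<in>E. p e = i}"
    by (intro allI impI ic_small) (use p in \<open>auto simp: bij_betw_def inj_on_def\<close>)
  show ?thesis
    apply (rule exI[where x="card E"])
    apply (rule exI[where x=p])
    using A B by simp
qed

lemma ic_le: assumes "(\<forall>e\<in>E. p e < k) \<and> (\<forall>i<k. interval_colourable {e\<in>E. p e = i})"
  shows "ic_thickness E \<le> k"
  unfolding ic_thickness_def by (rule Least_le) (use assms in blast)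

lemma ic_thick: assumes "finite E"
  shows "\<exists>p. (\<forall>e\<in>E. p e < ic_thickness E) \<and> (\<forall>i<ic_thickness E. interval_colourable {e\<in>E. p e = i})"
  unfolding ic_thickness_def by (rule LeastI_ex) (use ic_ex[OF assms] in blast)

lemma ic_union: assumes "finite A" "finite B" "A \<inter> B = {}"
  shows "ic_thickness (A \<union> B) \<le> ic_thickness A + ic_thickness B"
proof -
  obtain pA where pA: "\<forall>e\<in>A. pA e < ic_thickness A" "\<forall>i<ic_thickness A. interval_colourable {e\<in>A. pA e = i}"
    using ic_thick[OF assms(1)] by blast
  obtain pB where pB: "\<forall>e\<in>B. pB e < ic_thickness B" "\<forall>i<ic_thickness B. interval_colourable {e\<in>B. pB e = i}"
    using ic_thick[OF assms(2)] by blast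
  define kA where "kA = ic_thickness A"
  define p where "p e = (if e \<in> A then pA e else kA + pB e)" for e
  show ?thesis
  proof (rule ic_le[of _ p], intro conjI ballI allI impI)
    fix e assume "e \<in> A \<union> B" then show "p e < ic_thickness A + ic_thickness B"
      using pA pB by (auto simp: p_def kA_def)
  next
    fix i assume i: "i < ic_thickness A + ic_thickness B"
    show "interval_colourable {e \<in> A \<union> B. p e = i}"
    proof (cases "i < kA")
      case True
      then have "{e \<in> A \<union> B. p e = i} = {e\<in>A. pA e = i}" using assms(3) by (auto simp: p_def)
      then show ?thesis using pA True kA_def by simp
    next
      case False
      then have "{e \<in> A \<union> B. p e = i} = {e\<in>B. pB e = i - kA}" using assms(3) pA
        by (auto simp: p_def kA_def)
      then show ?thesis using pB False i kA_def by simp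
    qed
  qed
qed

lemma star_ic:
  assumes fin: "finite F" and two: "\<forall>e\<in>F. card e = 2" and lin: "\<forall>e\<in>F. l e \<in> e"
    and st: "\<forall>e\<in>F. \<forall>f\<in>F. e \<noteq> f \<longrightarrow> l e \<notin> f"
  shows "interval_colourable F"
proof -
  define h where "h e = (SOME x. x \<in> e \<and> x \<noteq> l e)" for e :: "nat set"
  have eq: "e = {l e, h e}" if "e \<in> F" for e
  proof -
    from two that obtain x y where xy: "e = {x,y}" "x \<noteq> y" by (meson card_2_iff)
    have "\<exists>z. z \<in> e \<and> z \<noteq> l e" using xy by (cases "x = l e") auto
    then have "h e \<in> e \<and> h e \<noteq> l e" unfolding h_def by (rule someI_ex)
    then show ?thesis using xy lin that by auto
  qed
  have hne: "h e \<noteq> l e" if "e \<in> F" for e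
  proof
    assume "h e = l e" then have "e = {l e}" using eq[OF that] by (metis insert_absorb2)
    then have "card e = 1" by (metis is_singleton_altdef is_singleton_def)
    then show False using two that by simp
  qed
  define S where "S v = {e\<in>F. h e = v}" for v
  define g where "g v = (SOME g. bij_betw g (S v) {0..<card (S v)})" for v
  have gb: "bij_betw (g v) (S v) {0..<card (S v)}" for v
  proof -
    have "finite (S v)" by (simp add: S_def fin)
    from someI_ex[OF ex_bij_betw_finite_nat[OF this]] show ?thesis unfolding g_def .
  qed
  define c where "c e = g (h e) e" for e
  have cS: "c ` S v = {0..<card (S v)}" for v
  proof -
    have "c ` S v = g v ` S v" by (auto simp: c_def S_def)
    then show ?thesis using gb[of v] by (simp add: bij_betw_def)
  qed
  have "interval_colouring F c"
    unfolding interval_colouring_def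
  proof (intro conjI allI ballI impI)
    fix e f assume ef: "e \<in> F" "f \<in> F" "e \<noteq> f \<and> e \<inter> f \<noteq> {}"
    then obtain x where x: "x \<in> e" "x \<in> f" by blast
    have "x \<noteq> l e" using st ef x by blast
    then have "x = h e" using x eq[OF ef(1)] by blast
    have "x \<noteq> l f" using st ef x by blast
    then have "x = h f" using x eq[OF ef(2)] by blast
    have "e \<in> S x" "f \<in> S x" using ef \<open>x = h e\<close> \<open>x = h f\<close> by (auto simp: S_def)
    then have "g x e \<noteq> g x f" using gb[of x] ef by (auto simp: bij_betw_def inj_on_def)
    then show "c e \<noteq> c f" using \<open>x = h e\<close> \<open>x = h f\<close> by (simp add: c_def)
  next
    fix v a b x
    assume H: "a \<in> c ` {e \<in> F. v \<in> e} \<and> b \<in> c ` {e \<in> F. v \<in> e} \<and> a \<le> x \<and> x \<le> b"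
    show "x \<in> c ` {e \<in> F. v \<in> e}"
    proof (cases "\<exists>e\<in>F. l e = v")
      case True
      then obtain e where e: "e \<in> F" "l e = v" by blast
      have "{e \<in> F. v \<in> e} = {e}"
      proof (rule set_eqI, rule iffI)
        fix f assume "f \<in> {e \<in> F. v \<in> e}"
        then show "f \<in> {e}" using st e by blast
      next
        fix f assume "f \<in> {e}" then show "f \<in> {e \<in> F. v \<in> e}" using e lin by auto
      qed
      note E = this
      have "a \<in> {c e}" "b \<in> {c e}" using H by (simp_all only: E image_insert image_empty)
      then have "x = c e" using H by simp
      then show ?thesis unfolding E by simp
    next
      case False
      have "{e \<in> F. v \<in> e} = S v" unfolding S_def
      proof (rule set_eqI, rule iffI)
        fix f assume f: "f \<in> {e \<in> F. v \<in> e}"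
        then have "v \<noteq> l f" using False by blast
        then show "f \<in> {e \<in> F. h e = v}" using f eq[of f] by blast
      next
        fix f assume f: "f \<in> {e \<in> F. h e = v}"
        then show "f \<in> {e \<in> F. v \<in> e}" using eq[of f] by blast
      qed
      then have "c ` {e \<in> F. v \<in> e} = {0..<card (S v)}" using cS by simp
      note E = this
      have "b \<in> {0..<card (S v)}" using H by (simp only: E)
      then have "x \<in> {0..<card (S v)}" using H by simp
      then show ?thesis by (simp only: E)
    qed
  qed
  then show ?thesis unfolding interval_colourable_def by blast
qed

lemma ic_relabel: assumes fin: "finite E" and inj: "inj_on f (\<Union>E)"
  shows "ic_thickness E \<le> ic_thickness ((`) f ` E)"
proof -
  define E' where "E' = (`) f ` E"
  have fin': "finite E'" using fin by (simp add: E'_def)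
  obtain p' where p': "\<forall>e\<in>E'. p' e < ic_thickness E'"
      "\<forall>i<ic_thickness E'. interval_colourable {e\<in>E'. p' e = i}"
    using ic_thick[OF fin'] by blast
  define p where "p e = p' (f ` e)" for e
  have sub: "e \<subseteq> \<Union>E" if "e \<in> E" for e using that by blast
  have injE: "f ` e1 = f ` e2 \<longleftrightarrow> e1 = e2" if "e1 \<in> E" "e2 \<in> E" for e1 e2
    using inj_on_image_eq_iff[OF inj sub[OF that(1)] sub[OF that(2)]] .
  show ?thesis unfolding E'_def[symmetric]
  proof (rule ic_le[of _ p], intro conjI ballI allI impI)
    fix e assume "e \<in> E" then show "p e < ic_thickness E'" using p' by (simp add: p_def E'_def)
  next
    fix i assume i: "i < ic_thickness E'"
    define C where "C = {e\<in>E. p e = i}"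
    define C' where "C' = {e\<in>E'. p' e = i}"
    have CC: "C' = (`) f ` C" by (auto simp: C_def C'_def E'_def p_def)
    obtain c' where c': "interval_colouring C' c'" using p'(2) i unfolding C'_def interval_colourable_def by blast
    define c where "c e = c' (f ` e)" for e
    have "interval_colouring C c" unfolding interval_colouring_def
    proof (intro conjI allI ballI impI)
      fix e1 e2 assume e: "e1 \<in> C" "e2 \<in> C" "e1 \<noteq> e2 \<and> e1 \<inter> e2 \<noteq> {}"
      have E: "e1 \<in> E" "e2 \<in> E" using e by (auto simp: C_def)
      have n1: "f ` e1 \<noteq> f ` e2" using injE[OF E] e by blast
      have n2: "f ` e1 \<inter> f ` e2 \<noteq> {}" using e by blast
      have n3: "f ` e1 \<in> C'" "f ` e2 \<in> C'" using e CC by auto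
      from c' have pr: "\<forall>e\<in>C'. \<forall>f\<in>C'. e \<noteq> f \<and> e \<inter> f \<noteq> {} \<longrightarrow> c' e \<noteq> c' f"
        unfolding interval_colouring_def by (rule conjunct1)
      have "c' (f ` e1) \<noteq> c' (f ` e2)" using pr n3 n1 n2 by simp
      then show "c e1 \<noteq> c e2" unfolding c_def .
    next
      fix v a b x
      assume H: "a \<in> c ` {e \<in> C. v \<in> e} \<and> b \<in> c ` {e \<in> C. v \<in> e} \<and> a \<le> x \<and> x \<le> b"
      then have vU: "v \<in> \<Union>E" by (auto simp: C_def)
      have mem: "f v \<in> f ` e \<longleftrightarrow> v \<in> e" if "e \<in> E" for e
        using inj_on_image_mem_iff[OF inj vU sub[OF that]] .
      have "{e' \<in> C'. f v \<in> e'} = (`) f ` {e \<in> C. v \<in> e}"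
        using mem by (auto simp: CC C_def)
      then have eqs: "c ` {e \<in> C. v \<in> e} = c' ` {e' \<in> C'. f v \<in> e'}"
        by (simp add: c_def image_image)
      have iv: "\<And>a b x. a \<in> c' ` {e' \<in> C'. f v \<in> e'} \<and> b \<in> c' ` {e' \<in> C'. f v \<in> e'} \<and> a \<le> x \<and> x \<le> b
        \<Longrightarrow> x \<in> c' ` {e' \<in> C'. f v \<in> e'}"
      proof -
        from c' have pr: "\<forall>v a b x. a \<in> c' ` {e\<in>C'. v \<in> e} \<and> b \<in> c' ` {e\<in>C'. v \<in> e} \<and> a \<le> x \<and> x \<le> b
        \<longrightarrow> x \<in> c' ` {e\<in>C'. v \<in> e}"
          unfolding interval_colouring_def by (rule conjunct2)
        show "x \<in> c' ` {e' \<in> C'. f v \<in> e'}" if "a \<in> c' ` {e' \<in> C'. f v \<in> e'} \<and> b \<in> c' ` {e' \<in> C'. f v \<in> e'} \<and> a \<le> x \<and> x \<le> b" for a b x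
          using pr[rule_format, OF that] .
      qed
      show "x \<in> c ` {e \<in> C. v \<in> e}" unfolding eqs by (rule iv) (use H in \<open>simp only: eqs\<close>)
    qed
    then show "interval_colourable {e \<in> E. p e = i}" unfolding interval_colourable_def C_def by blast
  qed
qed

lemma greedy:
  assumes fin: "finite E" and sym: "\<forall>e f. Q e f = Q f e"
    and deg: "\<forall>e\<in>E. card {f\<in>E. f \<noteq> e \<and> Q e f} < k"
  shows "\<exists>p. (\<forall>e\<in>E. p e < (k::nat)) \<and> (\<forall>e\<in>E. \<forall>f\<in>E. e \<noteq> f \<and> Q e f \<longrightarrow> p e \<noteq> p f)"
proof -
  have "\<exists>p. (\<forall>e\<in>F. p e < (k::nat)) \<and> (\<forall>e\<in>F. \<forall>f\<in>F. e \<noteq> f \<and> Q e f \<longrightarrow> p e \<noteq> p f)"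
    if "F \<subseteq> E" for F
    using finite_subset[OF that fin] that
  proof (induction F rule: finite_subset_induct')
    case empty then show ?case by simp
  next
    case (insert a F)
    then obtain p where p: "\<forall>e\<in>F. p e < k" "\<forall>e\<in>F. \<forall>f\<in>F. e \<noteq> f \<and> Q e f \<longrightarrow> p e \<noteq> p f"
      by blast
    define N where "N = {f\<in>F. Q a f}"
    have "N \<subseteq> {f\<in>E. f \<noteq> a \<and> Q a f}" using insert by (auto simp: N_def)
    then have "card N \<le> card {f\<in>E. f \<noteq> a \<and> Q a f}" by (intro card_mono) (use fin in auto)
    moreover have "card (p ` N) \<le> card N" by (rule card_image_le) (use insert(1) in \<open>simp add: N_def\<close>)
    moreover have "card {f\<in>E. f \<noteq> a \<and> Q a f} < k" using deg insert(2) by blast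
    ultimately have cN: "card (p ` N) < k" by linarith
    have "\<not> {0..<k} \<subseteq> p ` N"
    proof
      assume "{0..<k} \<subseteq> p ` N"
      then have "card {0..<k} \<le> card (p ` N)" by (intro card_mono) (use insert(1) in \<open>auto simp: N_def\<close>)
      then show False using cN by simp
    qed
    then obtain col where col0: "col \<in> {0..<k}" "col \<notin> p ` N" by blast
    then have col: "col < k" "col \<notin> p ` N" by auto
    define p2 where "p2 = p(a := col)"
    show ?case
    proof (rule exI[of _ p2], intro conjI ballI impI)
      fix e assume "e \<in> insert a F" then show "p2 e < k" using p col by (auto simp: p2_def)
    next
      fix e f assume e: "e \<in> insert a F" "f \<in> insert a F" "e \<noteq> f \<and> Q e f"
      show "p2 e \<noteq> p2 f"
      proof (cases "e = a")
        case True
        then have "f \<in> N" using e by (auto simp: N_def)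
        then show ?thesis using True col e insert(4) by (auto simp: p2_def)
      next
        case False
        note F = this
        show ?thesis
        proof (cases "f = a")
          case True
          then have "e \<in> N" using e F sym by (auto simp: N_def)
          then show ?thesis using True col e insert(4) F by (auto simp: p2_def)
        next
          case False
          then show ?thesis using F e p by (auto simp: p2_def)
        qed
      qed
    qed
  qed
  then show ?thesis by blast
qed

lemma main_bound:
  assumes se: "simple_edges E" and d1: "1 \<le> d"
  shows "\<exists>h. h * d \<le> 2 * card E \<and> ic_thickness E \<le> theta_n h + 2 * d"
proof -
  have fin: "finite E" and two: "\<forall>e\<in>E. card e = 2" using se by (auto simp: simple_edges_def)
  have fine: "finite e" if "e \<in> E" for e using two that by (metis card.infinite zero_neq_numeral)
  define deg where "deg v = card {e\<in>E. v \<in> e}" for v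
  define H where "H = {v \<in> \<Union>E. d \<le> deg v}"
  define E2 where "E2 = {e\<in>E. \<exists>v\<in>e. deg v < d}"
  define E1 where "E1 = E - E2"
  have finU: "finite (\<Union>E)" using fin fine by blast
  have finH: "finite H" by (rule finite_subset[OF _ finU]) (auto simp: H_def)
  have "card H * d = (\<Sum>v\<in>H. d)" by simp
  also have "\<dots> \<le> (\<Sum>v\<in>H. deg v)" by (rule sum_mono) (simp add: H_def)
  also have "\<dots> = (\<Sum>v\<in>H. \<Sum>e\<in>{e\<in>E. v \<in> e}. 1)" by (simp add: deg_def)
  also have "\<dots> = (\<Sum>e\<in>E. \<Sum>v\<in>{v\<in>H. v \<in> e}. 1)" by (rule sum.swap_restrict[OF finH fin])
  also have "\<dots> = (\<Sum>e\<in>E. card {v\<in>H. v \<in> e})" by simp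
  also have "\<dots> \<le> (\<Sum>e\<in>E. 2)"
  proof (rule sum_mono)
    fix e assume e: "e \<in> E"
    have "card {v\<in>H. v \<in> e} \<le> card e" by (rule card_mono) (use fine[OF e] in auto)
    then show "card {v\<in>H. v \<in> e} \<le> 2" using two e by simp
  qed
  also have "\<dots> = 2 * card E" by simp
  finally have cH: "card H * d \<le> 2 * card E" .

  obtain \<phi> where \<phi>: "bij_betw \<phi> H {0..<card H}" using ex_bij_betw_finite_nat[OF finH] by blast
  have E1H: "e \<subseteq> H" if "e \<in> E1" for e
  proof
    fix v assume v: "v \<in> e"
    have "e \<in> E" "\<not> (\<exists>v\<in>e. deg v < d)" using that by (auto simp: E1_def E2_def)
    then show "v \<in> H" using v by (auto simp: H_def)
  qed
  have injU: "inj_on \<phi> (\<Union>E1)"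
    by (rule inj_on_subset[OF bij_betw_imp_inj_on[OF \<phi>]]) (use E1H in blast)
  have finE1: "finite E1" using fin by (simp add: E1_def)
  have t1: "ic_thickness E1 \<le> ic_thickness ((`) \<phi> ` E1)" by (rule ic_relabel[OF finE1 injU])
  have t2: "ic_thickness ((`) \<phi> ` E1) \<le> theta_n (card H)"
    unfolding theta_n_def
  proof (rule Max_ge)
    let ?n = "card H"
    have "{ic_thickness E |E. simple_edges E \<and> (\<forall>e\<in>E. e \<subseteq> {0..<?n})} \<subseteq> ic_thickness ` Pow (Pow {0..<?n})"
      by auto
    then show "finite {ic_thickness E |E. simple_edges E \<and> (\<forall>e\<in>E. e \<subseteq> {0..<?n})}"
      by (rule finite_subset) simp
    have se': "simple_edges ((`) \<phi> ` E1)" unfolding simple_edges_def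
    proof (intro conjI ballI)
      show "finite ((`) \<phi> ` E1)" using finE1 by simp
      fix e' assume "e' \<in> (`) \<phi> ` E1"
      then obtain e where e: "e \<in> E1" "e' = \<phi> ` e" by blast
      have "inj_on \<phi> e" by (rule inj_on_subset[OF bij_betw_imp_inj_on[OF \<phi>] E1H[OF e(1)]])
      then have "card e' = card e" using e(2) by (simp add: card_image)
      then show "card e' = 2" using two e(1) by (simp add: E1_def)
    qed
    have "\<forall>e'\<in>(`) \<phi> ` E1. e' \<subseteq> {0..<?n}"
      using E1H bij_betw_imp_surj_on[OF \<phi>] by blast
    then show "ic_thickness ((`) \<phi> ` E1) \<in> {ic_thickness E |E. simple_edges E \<and> (\<forall>e\<in>E. e \<subseteq> {0..<?n})}"
      using se' by blast
  qed

  define l where "l e = (SOME v. v \<in> e \<and> deg v < d)" for e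
  have l: "l e \<in> e \<and> deg (l e) < d" if "e \<in> E2" for e
  proof -
    have "\<exists>v. v \<in> e \<and> deg v < d" using that by (auto simp: E2_def)
    then show ?thesis unfolding l_def by (rule someI_ex)
  qed
  define Q where "Q e f = (l e \<in> f \<or> l f \<in> e)" for e f
  have finE2: "finite E2" using fin by (simp add: E2_def)
  have degb: "card {f\<in>E2. f \<noteq> e \<and> Q e f} < 2 * d" if eE: "e \<in> E2" for e
  proof -
    have eE': "e \<in> E" using eE by (simp add: E2_def)
    obtain x y where xy: "e = {x, y}" "x \<noteq> y" using two eE' by (meson card_2_iff)
    define w where "w = (if x = l e then y else x)"
    have ew: "\<forall>u. u \<in> e \<longrightarrow> u = l e \<or> u = w" using xy l[OF eE] unfolding w_def by auto
    define A where "A = {f\<in>E. l e \<in> f}"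
    define B where "B = {f\<in>E2. l f = w}"
    have "{f\<in>E2. f \<noteq> e \<and> Q e f} \<subseteq> A \<union> B"
    proof
      fix f assume f: "f \<in> {f\<in>E2. f \<noteq> e \<and> Q e f}"
      then have fE: "f \<in> E2" "Q e f" by auto
      have fE': "f \<in> E" using fE by (simp add: E2_def)
      show "f \<in> A \<union> B"
      proof (cases "l e \<in> f")
        case True then show ?thesis using fE' by (simp add: A_def)
      next
        case False
        then have "l f \<in> e" using fE(2) by (simp add: Q_def)
        then have "l f = l e \<or> l f = w" using ew by blast
        moreover have "l f \<in> f" using l[OF fE(1)] by blast
        ultimately have "l f = w" using False by auto
        then show ?thesis using fE by (simp add: B_def)
      qed
    qed
    then have "card {f\<in>E2. f \<noteq> e \<and> Q e f} \<le> card (A \<union> B)"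
      by (rule card_mono[rotated]) (simp add: A_def B_def fin finE2)
    also have "\<dots> \<le> card A + card B" by (rule card_Un_le)
    also have "card A < d" using l[OF eE] by (simp add: A_def deg_def)
    also have "card B < d"
    proof (cases "B = {}")
      case True then show ?thesis using d1 by simp
    next
      case False
      then obtain f0 where f0: "f0 \<in> E2" "l f0 = w" by (auto simp: B_def)
      have "deg w < d" using l[OF f0(1)] f0(2) by simp
      moreover have "B \<subseteq> {f\<in>E. w \<in> f}" using l by (auto simp: B_def E2_def)
      then have "card B \<le> deg w" unfolding deg_def by (rule card_mono[rotated]) (simp add: fin)
      ultimately show ?thesis by linarith
    qed
    finally show ?thesis by linarith
  qed
  have symQ: "\<forall>e f. Q e f = Q f e" by (auto simp: Q_def)
  have dd: "\<forall>e\<in>E2. card {f\<in>E2. f \<noteq> e \<and> Q e f} < 2 * d" using degb by blast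
  from greedy[OF finE2 symQ dd] obtain p where
    pp: "(\<forall>e\<in>E2. p e < 2 * d) \<and> (\<forall>e\<in>E2. \<forall>f\<in>E2. e \<noteq> f \<and> Q e f \<longrightarrow> p e \<noteq> p f)" ..
  note p = conjunct1[OF pp] conjunct2[OF pp]
  have t3: "ic_thickness E2 \<le> 2 * d"
  proof (rule ic_le[of _ p], intro conjI allI impI)
    show "\<forall>e\<in>E2. p e < 2 * d" using p(1) .
    fix i assume "i < 2 * d"
    show "interval_colourable {e\<in>E2. p e = i}"
    proof (rule star_ic[where l = l])
      show "finite {e\<in>E2. p e = i}" using finE2 by simp
      show "\<forall>e\<in>{e\<in>E2. p e = i}. card e = 2" using two by (auto simp: E2_def)
      show "\<forall>e\<in>{e\<in>E2. p e = i}. l e \<in> e" using l by blast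
      show "\<forall>e\<in>{e\<in>E2. p e = i}. \<forall>f\<in>{e\<in>E2. p e = i}. e \<noteq> f \<longrightarrow> l e \<notin> f"
        using p(2) by (auto simp: Q_def)
    qed
  qed
  have EU: "E = E1 \<union> E2" and disj: "E1 \<inter> E2 = {}" by (auto simp: E1_def E2_def)
  have "ic_thickness E \<le> ic_thickness E1 + ic_thickness E2"
    unfolding EU by (rule ic_union[OF finE1 finE2 disj])
  then have "ic_thickness E \<le> theta_n (card H) + 2 * d" using t1 t2 t3 by linarith
  then show ?thesis using cH by blast
qed

lemma real_bound:
  fixes \<alpha> c K :: real and m h d :: nat
  assumes a0: "0 < \<alpha>" and a1: "\<alpha> \<le> 1" and c0: "0 \<le> c" and m1: "1 \<le> m"
    and dd: "d = nat \<lceil>real m powr (\<alpha> / (1 + \<alpha>))\<rceil>" and hd: "h * d \<le> 2 * m"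
  shows "c * real h powr \<alpha> + K + 2 * real d \<le> (2 * c + 4 + \<bar>K\<bar>) * real m powr (\<alpha> / (1 + \<alpha>))"
proof -
  define \<beta> where "\<beta> = \<alpha> / (1 + \<alpha>)"
  have b0: "0 \<le> \<beta>" using a0 by (simp add: \<beta>_def)
  have mpos: "0 < real m" using m1 by simp
  have mb: "1 \<le> real m powr \<beta>" by (rule ge_one_powr_ge_zero) (use m1 b0 in auto)
  have dr: "real d = of_int \<lceil>real m powr \<beta>\<rceil>" unfolding dd \<beta>_def[symmetric]
    by (rule of_nat_nat) (use mb in linarith)
  have d_ge: "real m powr \<beta> \<le> real d" unfolding dr by (rule le_of_int_ceiling)
  have d_le: "real d \<le> real m powr \<beta> + 1" unfolding dr by (rule of_int_ceiling_le_add_one)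
  have dpos: "0 < real d" using d_ge mb by linarith
  have "real h * real d \<le> 2 * real m" using hd by (metis of_nat_le_iff of_nat_mult of_nat_numeral)
  then have h1: "real h \<le> 2 * real m / real d" using dpos by (simp add: pos_le_divide_eq)
  also have "\<dots> \<le> 2 * real m / real m powr \<beta>"
    by (rule divide_left_mono) (use d_ge mb mpos in auto)
  also have "\<dots> = 2 * real m powr (1 - \<beta>)"
    using mpos by (simp add: powr_diff)
  finally have h2: "real h \<le> 2 * real m powr (1 - \<beta>)" .
  have "real h powr \<alpha> \<le> (2 * real m powr (1 - \<beta>)) powr \<alpha>"
    by (rule powr_mono2) (use a0 h2 in auto)
  also have "\<dots> = 2 powr \<alpha> * real m powr ((1 - \<beta>) * \<alpha>)"
    using mpos by (simp add: powr_mult powr_powr)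
  also have "(1 - \<beta>) * \<alpha> = \<beta>" using a0 by (simp add: \<beta>_def field_simps)
  also have "2 powr \<alpha> \<le> (2::real) powr 1" by (rule powr_mono) (use a1 in auto)
  then have "2 powr \<alpha> * real m powr \<beta> \<le> 2 * real m powr \<beta>" using mb by (simp add: mult_right_mono)
  finally have hp: "real h powr \<alpha> \<le> 2 * real m powr \<beta>" by simp
  have "c * real h powr \<alpha> \<le> c * (2 * real m powr \<beta>)" by (rule mult_left_mono[OF hp c0])
  moreover have "K \<le> \<bar>K\<bar> * real m powr \<beta>" using mb
    by (metis abs_ge_self abs_ge_zero mult.right_neutral mult_left_mono order_trans)
  moreover have "2 * real d \<le> 4 * real m powr \<beta>" using d_le mb by linarith
  ultimately show ?thesis unfolding \<beta>_def[symmetric] by (simp add: algebra_simps)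
qed

lemma ic_le_card: assumes "finite E" shows "ic_thickness E \<le> card E"
proof -
  obtain p where p: "bij_betw p E {0..<card E}" using ex_bij_betw_finite_nat[OF assms] by blast
  show ?thesis
  proof (rule ic_le[of _ p], intro conjI ballI allI impI)
    fix e assume "e \<in> E" then show "p e < card E" using p by (auto simp: bij_betw_def)
  next
    fix i show "interval_colourable {e\<in>E. p e = i}"
      by (rule ic_small) (use p in \<open>auto simp: bij_betw_def inj_on_def\<close>)
  qed
qed

lemma theta_m_attained: "\<exists>E. simple_edges E \<and> card E = m \<and> theta_m m = ic_thickness E"
proof -
  define S where "S = {ic_thickness E | E. simple_edges E \<and> card E = m}"
  have "S \<subseteq> {..m}" unfolding S_def using ic_le_card by (auto simp: simple_edges_def)
  then have finS: "finite S" by (rule finite_subset) simp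
  define E0 where "E0 = (\<lambda>i. {2*i, 2*i+1}) ` {..<m}"
  have inj: "inj_on (\<lambda>i::nat. {2*i, 2*i+1}) {..<m}"
    by (auto simp: inj_on_def doubleton_eq_iff)
  have "card E0 = m" unfolding E0_def by (rule trans[OF card_image[OF inj]]) simp
  moreover have "simple_edges E0" unfolding simple_edges_def E0_def by auto
  ultimately have "S \<noteq> {}" unfolding S_def by blast
  then have "Max S \<in> S" using finS by (rule Max_in[rotated])
  then show ?thesis unfolding S_def theta_m_def by auto
qed

theorem lemma7:
  fixes \<alpha> :: real
  assumes "0 < \<alpha>" and "\<alpha> \<le> 1"
    and "(\<lambda>n. real (theta_n n)) \<in> O(\<lambda>n. real n powr \<alpha>)"
  shows "(\<lambda>m. real (theta_m m)) \<in> O(\<lambda>m. real m powr (\<alpha> / (1 + \<alpha>)))"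
proof -
  obtain c where c: "c > 0" and ev: "eventually (\<lambda>n. norm (real (theta_n n)) \<le> c * norm (real n powr \<alpha>)) at_top"
    using assms(3) by (rule landau_o.bigE)
  then obtain N where N: "\<forall>n\<ge>N. norm (real (theta_n n)) \<le> c * norm (real n powr \<alpha>)"
    by (auto simp: eventually_at_top_linorder)
  define K where "K = real (Max (theta_n ` {..<N}))"
  have tn: "real (theta_n n) \<le> c * real n powr \<alpha> + K" for n
  proof (cases "n < N")
    case True
    then have "theta_n n \<le> Max (theta_n ` {..<N})" by (intro Max_ge) auto
    moreover have "0 \<le> c * real n powr \<alpha>" using c by simp
    ultimately show ?thesis unfolding K_def by linarith
  next
    case False
    then have "real (theta_n n) \<le> c * real n powr \<alpha>" using N by auto
    moreover have "0 \<le> K" by (simp add: K_def)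
    ultimately show ?thesis by linarith
  qed
  define \<beta> where "\<beta> = \<alpha> / (1 + \<alpha>)"
  have b0: "0 \<le> \<beta>" using assms by (simp add: \<beta>_def)
  have main: "real (theta_m m) \<le> (2 * c + 4 + \<bar>K\<bar>) * real m powr \<beta>" if m1: "1 \<le> m" for m
  proof -
    define d where "d = nat \<lceil>real m powr \<beta>\<rceil>"
    have mb: "1 \<le> real m powr \<beta>" by (rule ge_one_powr_ge_zero) (use m1 b0 in auto)
    have d1: "1 \<le> d" unfolding d_def using mb by linarith
    obtain E where E: "simple_edges E" "card E = m" "theta_m m = ic_thickness E"
      using theta_m_attained by blast
    obtain h where h: "h * d \<le> 2 * card E" "ic_thickness E \<le> theta_n h + 2 * d"
      using main_bound[OF E(1) d1] by blast
    have "real (theta_m m) \<le> real (theta_n h) + 2 * real d" using h(2) E(3) by simp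
    also have "\<dots> \<le> c * real h powr \<alpha> + K + 2 * real d" using tn[of h] by simp
    also have "\<dots> \<le> (2 * c + 4 + \<bar>K\<bar>) * real m powr \<beta>"
      unfolding \<beta>_def
      by (rule real_bound) (use assms c m1 h(1) E(2) in \<open>auto simp: d_def \<beta>_def\<close>)
    finally show ?thesis .
  qed
  show ?thesis unfolding \<beta>_def[symmetric]
  proof (rule bigoI[where c = "2 * c + 4 + \<bar>K\<bar>"])
    show "eventually (\<lambda>m. norm (real (theta_m m)) \<le> (2 * c + 4 + \<bar>K\<bar>) * norm (real m powr \<beta>)) at_top"
      unfolding eventually_at_top_linorder
      by (rule exI[of _ 1]) (use main in simp)
  qed
qed

end
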